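(* A finite sequence $i_1i_2\dots i_n$ of symbols from $\{1,2,\dots,N\}$ is stable if and only if it can be reduced to the empty sequence by a finite number of operations of the following types: (a) transposing two adjacent blocks of consecutive terms, each block consisting of two symbols (i.e. replacing $\dots ab\,cd\dots$ by $\dots cd\,ab\dots$); (b) deleting a block of two consecutive identical symbols.
   Context: A sequence $i_1i_2\dots i_n$ of symbols is stable if its terms can be partitioned into disjoint pairs of identical symbols, with one term of each pair at an odd position and the other at an even position; equivalently, $n$ is even and the formal alternating sum $i_1-i_2+\dots+i_{n-1}-i_n$ vanishes as a formal sum of symbols. *)

theory Defs
  imports Main
begin

text \<open>A sequence i_1 ... i_n is represented as a list xs, with term i_(k+1) = xs ! k.
  Position k+1 is odd iff list index k is even.  Stability: the terms can be partitioned
  into disjoint pairs of identical symbols, one at an odd and one at an even position,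
  i.e. there is a bijection from the odd positions onto the even positions that preserves
  the symbol.\<close>

definition stable :: "'a list \<Rightarrow> bool" where
  "stable xs \<longleftrightarrow>
     (\<exists>f. bij_betw f {k. k < length xs \<and> even k} {k. k < length xs \<and> odd k}
          \<and> (\<forall>k. k < length xs \<and> even k \<longrightarrow> xs ! (f k) = xs ! k))"

inductive reduce_step :: "'a list \<Rightarrow> 'a list \<Rightarrow> bool" where
  swap: "reduce_step (u @ [a, b, c, d] @ v) (u @ [c, d, a, b] @ v)"
| cancel: "reduce_step (u @ [a, a] @ v) (u @ v)"

end

theory Submission
  imports Defs "HOL-Library.Multiset"
begin

fun ev :: "'a list \<Rightarrow> 'a multiset" where
  "ev [] = {#}"
| "ev [x] = {#x#}"
| "ev (x # y # xs) = add_mset x (ev xs)"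

definition od :: "'a list \<Rightarrow> 'a multiset" where
  "od xs = ev (tl xs)"

lemma od_Nil[simp]: "od [] = {#}" by (simp add: od_def)
lemma od_Cons[simp]: "od (x # xs) = ev xs" by (simp add: od_def)
lemma ev_Cons[simp]: "ev (x # xs) = add_mset x (od xs)"
  by (cases xs) (auto simp: od_def)
declare ev.simps(2,3)[simp del]

lemma evod_append:
  "ev (xs @ ys) = (if even (length xs) then ev xs + ev ys else ev xs + od ys) \<and>
   od (xs @ ys) = (if even (length xs) then od xs + od ys else od xs + ev ys)"
  by (induction xs) auto

lemma ev_append: "ev (xs @ ys) = (if even (length xs) then ev xs + ev ys else ev xs + od ys)"
  using evod_append by blast
lemma od_append: "od (xs @ ys) = (if even (length xs) then od xs + od ys else od xs + ev ys)"
  using evod_append by blast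

lemma step_inv: "reduce_step x y \<Longrightarrow> (ev x = od x \<longleftrightarrow> ev y = od y)"
proof (induction rule: reduce_step.induct)
  case (swap u a b c d v)
  then show ?case by (simp add: ev_append od_append add_ac add_mset_commute)
next
  case (cancel u a v)
  then show ?case by (auto simp add: ev_append od_append add_ac)
qed

lemma steps_inv: "reduce_step\<^sup>*\<^sup>* x y \<Longrightarrow> (ev x = od x \<longleftrightarrow> ev y = od y)"
  by (induction rule: rtranclp_induct) (auto dest: step_inv)

lemma evod_sets:
  "image_mset (nth xs) (mset_set {k. k < length xs \<and> even k}) = ev xs \<and>
   image_mset (nth xs) (mset_set {k. k < length xs \<and> odd k}) = od xs"
proof (induction xs)
  case Nil
  then show ?case by simp
next
  case (Cons x xs)
  have e: "{k. k < length (x#xs) \<and> even k} = insert 0 (Suc ` {k. k < length xs \<and> odd k})"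
    by (rule set_eqI, case_tac xa) (auto simp: image_iff)
  have o: "{k. k < length (x#xs) \<and> odd k} = Suc ` {k. k < length xs \<and> even k}"
    by (rule set_eqI, case_tac xa) (auto simp: image_iff)
  have "image_mset (nth (x#xs)) (mset_set (Suc ` {k. k < length xs \<and> odd k}))
      = image_mset (nth (x#xs)) (image_mset Suc (mset_set {k. k < length xs \<and> odd k}))"
    by (simp add: image_mset_mset_set)
  also have "\<dots> = od xs" using Cons by (simp add: multiset.map_comp comp_def)
  finally have 1: "image_mset (nth (x#xs)) (mset_set (Suc ` {k. k < length xs \<and> odd k})) = od xs" .
  have "image_mset (nth (x#xs)) (mset_set (Suc ` {k. k < length xs \<and> even k}))
      = image_mset (nth (x#xs)) (image_mset Suc (mset_set {k. k < length xs \<and> even k}))"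
    by (simp add: image_mset_mset_set)
  also have "\<dots> = ev xs" using Cons by (simp add: multiset.map_comp comp_def)
  finally have 2: "image_mset (nth (x#xs)) (mset_set (Suc ` {k. k < length xs \<and> even k})) = ev xs" .
  show ?case unfolding e o using 1 2 by simp
qed

lemma bij_exists:
  assumes "finite A" "finite B" "image_mset g (mset_set A) = image_mset g (mset_set B)"
  shows "\<exists>f. bij_betw f A B \<and> (\<forall>x\<in>A. g (f x) = g x)"
  using assms
proof (induction A arbitrary: B rule: finite_induct)
  case empty
  then have "mset_set B = {#}" by simp
  then have "B = {}" using empty.prems(1) by (simp add: mset_set_empty_iff)
  then show ?case by (simp add: bij_betw_def)
next
  case (insert a A B)
  have mA: "mset_set (insert a A) = add_mset a (mset_set A)"
    using insert.hyps by simp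
  have eq: "image_mset g (mset_set B) = add_mset (g a) (image_mset g (mset_set A))"
    using insert.prems(2) mA by simp
  then have "g a \<in># image_mset g (mset_set B)" by simp
  then have "g a \<in> g ` set_mset (mset_set B)" by simp
  then obtain b where b0: "b \<in># mset_set B" "g b = g a" by (metis imageE)
  have b: "b \<in> B" "g b = g a" using b0 insert.prems(1) by simp_all
  have mB: "mset_set B = add_mset b (mset_set (B - {b}))"
    using b(1) insert.prems(1) by (simp add: mset_set.remove)
  have "add_mset (g a) (image_mset g (mset_set (B - {b}))) = add_mset (g a) (image_mset g (mset_set A))"
    using eq mB b(2) by simp
  then have "image_mset g (mset_set A) = image_mset g (mset_set (B - {b}))"
    by simp
  moreover have "finite (B - {b})" using insert.prems(1) by simp
  ultimately obtain f where f: "bij_betw f A (B - {b})" "\<forall>x\<in>A. g (f x) = g x"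
    using insert.IH by blast
  define h where "h = f(a := b)"
  have "bij_betw h A (B - {b})"
    using f(1) insert.hyps(2) unfolding h_def
    by (subst bij_betw_cong[where g=f]) auto
  moreover have "bij_betw h {a} {b}" by (simp add: h_def bij_betw_def)
  ultimately have "bij_betw h (A \<union> {a}) ((B - {b}) \<union> {b})"
    by (rule bij_betw_combine) blast
  moreover have "A \<union> {a} = insert a A" "(B - {b}) \<union> {b} = B" using b by blast+
  ultimately have "bij_betw h (insert a A) B" by simp
  moreover have "\<forall>x\<in>insert a A. g (h x) = g x"
    using f(2) b insert.hyps(2) by (simp add: h_def)
  ultimately show ?case by blast
qed

lemma stable_iff: "stable xs \<longleftrightarrow> ev xs = od xs"
proof
  assume "stable xs"
  then obtain f where f: "bij_betw f {k. k < length xs \<and> even k} {k. k < length xs \<and> odd k}"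
    "\<forall>k. k < length xs \<and> even k \<longrightarrow> xs ! (f k) = xs ! k"
    unfolding stable_def by blast
  have "od xs = image_mset (nth xs) (mset_set (f ` {k. k < length xs \<and> even k}))"
    using evod_sets[of xs] f(1) by (simp add: bij_betw_def)
  also have "\<dots> = image_mset (nth xs) (image_mset f (mset_set {k. k < length xs \<and> even k}))"
    using f(1) by (simp add: bij_betw_def image_mset_mset_set)
  also have "\<dots> = image_mset (nth xs) (mset_set {k. k < length xs \<and> even k})"
    unfolding multiset.map_comp comp_def
    by (rule image_mset_cong) (use f(2) in auto)
  also have "\<dots> = ev xs" using evod_sets by blast
  finally show "ev xs = od xs" by simp
next
  assume "ev xs = od xs"
  then have "image_mset (nth xs) (mset_set {k. k < length xs \<and> even k}) =
             image_mset (nth xs) (mset_set {k. k < length xs \<and> odd k})"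
    using evod_sets by metis
  from bij_exists[OF _ _ this] show "stable xs"
    unfolding stable_def by auto
qed

lemma move_front: "length u = 2*n \<Longrightarrow> reduce_step\<^sup>*\<^sup>* (u @ [c,d] @ v) ([c,d] @ u @ v)"
proof (induction n arbitrary: u v)
  case 0
  then show ?case by simp
next
  case (Suc n)
  define u' where "u' = take (2*n) u"
  have d: "drop (2*n) u = [u!(2*n), u!(2*n+1)]"
    using Suc.prems
    by (simp add: Cons_nth_drop_Suc[symmetric])
  have u: "u = u' @ [u!(2*n), u!(2*n+1)]"
    unfolding u'_def using d by (metis append_take_drop_id)
  have lu: "length u' = 2*n" using Suc.prems by (simp add: u'_def)
  have "reduce_step (u' @ [u!(2*n), u!(2*n+1), c, d] @ v) (u' @ [c, d, u!(2*n), u!(2*n+1)] @ v)"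
    by (rule reduce_step.swap)
  moreover have "reduce_step\<^sup>*\<^sup>* (u' @ [c,d] @ ([u!(2*n), u!(2*n+1)] @ v)) ([c,d] @ u' @ ([u!(2*n), u!(2*n+1)] @ v))"
    by (rule Suc.IH[OF lu])
  ultimately show ?case
    by (subst (1 2) u) (auto intro: converse_rtranclp_into_rtranclp)
qed

lemma sizes: "size (ev xs) = (length xs + 1) div 2 \<and> size (od xs) = length xs div 2"
  by (induction xs) auto

lemma complete: "ev xs = od xs \<Longrightarrow> reduce_step\<^sup>*\<^sup>* xs []"
proof (induction "length xs" arbitrary: xs rule: less_induct)
  case less
  show ?case
  proof (cases "xs = []")
    case True then show ?thesis by simp
  next
    case False
    define a where "a = xs ! 0"
    have "a \<in># ev xs" using False by (cases xs) (auto simp: a_def)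
    then have "a \<in># od xs" using less.prems by simp
    then have "a \<in># image_mset (nth xs) (mset_set {k. k < length xs \<and> odd k})"
      using evod_sets by metis
    then obtain k where k: "k < length xs" "odd k" "xs ! k = a" by auto
    then obtain j where j: "k = 2*j+1" by (metis oddE)
    define u where "u = take (2*j) xs"
    define c where "c = xs ! (2*j)"
    define v where "v = drop (2*j+2) xs"
    have lu: "length u = 2*j" using k j by (simp add: u_def)
    have xs: "xs = u @ [c, a] @ v"
    proof -
      have 1: "drop (2*j) xs = xs!(2*j) # drop (Suc (2*j)) xs"
        using k j by (intro Cons_nth_drop_Suc[symmetric]) simp
      have 2: "drop (Suc (2*j)) xs = xs!(Suc (2*j)) # drop (Suc (Suc (2*j))) xs"
        using k j by (intro Cons_nth_drop_Suc[symmetric]) simp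
      have "drop (2*j) xs = c # a # v" using 1 2 k j unfolding c_def v_def by simp
      then show ?thesis unfolding u_def by (metis append_take_drop_id append_Cons append_Nil)
    qed
    have m: "reduce_step\<^sup>*\<^sup>* xs ([c,a] @ u @ v)"
      using move_front[OF lu, of c a v] xs by simp
    show ?thesis
    proof (cases "j = 0")
      case True
      then have "c = a" "u = []" using lu by (auto simp: c_def a_def)
      then have "reduce_step ([c,a] @ u @ v) ([] @ v)"
        using reduce_step.cancel[of "[]" a v] by simp
      moreover have "length v < length xs" using xs by simp
      moreover have r: "reduce_step\<^sup>*\<^sup>* xs v" using m calculation(1) by (simp add: rtranclp.rtrancl_into_rtrancl)
      ultimately show ?thesis using less steps_inv[OF r] by (meson rtranclp_trans)
    next
      case False
      then obtain b w where uw: "u = a # b # w"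
      proof -
        have l2: "1 < length u" using lu False by simp
        have "u = u!0 # u!1 # drop 2 u"
          using l2 by (cases u; cases "tl u") auto
        moreover have "u!0 = a" using l2 by (simp add: u_def a_def)
        ultimately show ?thesis using that by metis
      qed
      have "reduce_step ([c] @ [a,a] @ (b # w @ v)) ([c] @ (b # w @ v))"
        by (rule reduce_step.cancel)
      then have "reduce_step ([c,a] @ u @ v) (c # b # w @ v)" using uw by simp
      then have r: "reduce_step\<^sup>*\<^sup>* xs (c # b # w @ v)" using m by (simp add: rtranclp.rtrancl_into_rtrancl)
      have "length (c # b # w @ v) < length xs" using xs uw by simp
      then show ?thesis using less steps_inv[OF r] r by (meson rtranclp_trans)
    qed
  qed
qed

theorem lemma3p2:
  fixes N :: nat and xs :: "nat list"
  assumes "set xs \<subseteq> {1..N}"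
  shows "stable xs \<longleftrightarrow> reduce_step\<^sup>*\<^sup>* xs []"
  using complete steps_inv[of xs "[]"] stable_iff by auto

end
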